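(* Let $g$ be a balanced $n$-variable Boolean function, $b\in\mathbb{F}_2$, let $g_b$ be the $(n+1)$-variable function $$g_b(X_{n+1},X_n,\ldots,X_1)=(1\oplus X_{n+1})\,g(X_n,\ldots,X_1)\oplus X_{n+1}\bigl(b\oplus g(1\oplus X_n,\ldots,1\oplus X_1)\bigr),$$ and let $G_b=g_b\diamond g$ (an $n(n+1)$-variable function). Then $$\frac{H_\infty(G_b)}{\mathrm{Inf}(G_b)}=\frac{\min_{i\in\{0,\ldots,n+1\},\ a_i>0}\bigl(-\log a_i+i\,H_\infty(g)\bigr)}{\mathrm{Inf}(g)\bigl(\mathrm{Inf}(g)+\epsilon_b(g)\bigr)},$$ where $a_i=\max_{\mathbf{w}\in\mathbb{F}_2^{n+1},\ \mathrm{wt}(\mathbf{w})=i}W_{g_b}^2(\mathbf{w})$ and $\epsilon_b(g)=\sum_{\bm{\alpha}\in\mathbb{F}_2^n,\ \mathrm{wt}(\bm{\alpha})\not\equiv b\pmod 2}W_g^2(\bm{\alpha})$. Moreover, if there is an integer $t$ with $0\le t<n$ and $t\equiv b\pmod 2$ such that $g$ is plateaued and $t$-resilient but not $(t+1)$-resilient, then $$\frac{H_\infty(G_b)}{\mathrm{Inf}(G_b)}=\frac{H_\infty(g)}{\mathrm{Inf}(g)}\cdot\frac{t+3}{\mathrm{Inf}(g)+\epsilon_b(g)}.$$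
   Context: Boolean functions are maps $\mathbb{F}_2^n\to\mathbb{F}_2$; balanced means value $1$ on exactly $2^{n-1}$ inputs. Walsh transform: $W_f(\bm{\alpha})=2^{-n}\sum_{\mathbf{x}}(-1)^{f(\mathbf{x})\oplus\langle\mathbf{x},\bm{\alpha}\rangle}$, $\langle\mathbf{x},\bm{\alpha}\rangle=\bigoplus_ix_i\alpha_i$. Logarithms base 2. Min-entropy: $H_\infty(f)=\min_{\bm{\alpha}:W_f^2(\bm{\alpha})\ne0}\log(1/W_f^2(\bm{\alpha}))$. Influence: $\mathrm{Inf}(f)=\sum_{i=1}^n\Pr_{\mathbf{x}}[f(\mathbf{x})\ne f(\mathbf{x}\oplus\mathbf{e}_i)]=\sum_{\bm{\alpha}}\mathrm{wt}(\bm{\alpha})W_f^2(\bm{\alpha})$. Disjoint composition: for $f$ on $k$ variables and $h$ on $l$ variables, $(f\diamond h)(\mathbf{x})=f(h(\mathbf{x}^{(1)}),\ldots,h(\mathbf{x}^{(k)}))$ with $\mathbf{x}^{(i)}=(x_{(i-1)l+1},\ldots,x_{il})$. A function $f$ is $t$-resilient if $W_f(\bm{\alpha})=0$ for all $\bm{\alpha}$ with $\mathrm{wt}(\bm{\alpha})\le t$; $f$ is plateaued if there is $c$ such that $W_f(\bm{\alpha})\in\{0,c,-c\}$ for all $\bm{\alpha}$. *)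

theory Defs
  imports Complex_Main
begin

text \<open>Vectors of \<open>F_2^n\<close> are Boolean lists of length n; a list x = [x_1,...,x_n]
  (x ! i is the variable x_{i+1}). A Boolean function on n variables is a map
  \<open>bool list \<Rightarrow> bool\<close>, only its values on lists of length n matter.\<close>

definition vecs :: "nat \<Rightarrow> bool list set" where
  "vecs n = {x. length x = n}"

definition wt :: "bool list \<Rightarrow> nat" where
  "wt x = count_list x True"

definition inner :: "bool list \<Rightarrow> bool list \<Rightarrow> bool" where
  "inner x a = odd (length (filter (\<lambda>(u,v). u \<and> v) (zip x a)))"

definition sgn01 :: "bool \<Rightarrow> real" where
  "sgn01 b = (if b then -1 else 1)"

definition balanced :: "nat \<Rightarrow> (bool list \<Rightarrow> bool) \<Rightarrow> bool" where
  "balanced n f \<longleftrightarrow> 2 * card {x \<in> vecs n. f x} = 2 ^ n"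

definition walsh :: "nat \<Rightarrow> (bool list \<Rightarrow> bool) \<Rightarrow> bool list \<Rightarrow> real" where
  "walsh n f a = (\<Sum>x\<in>vecs n. sgn01 (f x \<noteq> inner x a)) / 2 ^ n"

definition min_entropy :: "nat \<Rightarrow> (bool list \<Rightarrow> bool) \<Rightarrow> real" where
  "min_entropy n f = Min {log 2 (1 / (walsh n f a)\<^sup>2) | a. a \<in> vecs n \<and> (walsh n f a)\<^sup>2 \<noteq> 0}"

text \<open>flip x i = x \<oplus> e_{i+1}\<close>
definition flip :: "bool list \<Rightarrow> nat \<Rightarrow> bool list" where
  "flip x i = x[i := \<not> x ! i]"

definition influence :: "nat \<Rightarrow> (bool list \<Rightarrow> bool) \<Rightarrow> real" where
  "influence n f = (\<Sum>i<n. real (card {x \<in> vecs n. f x \<noteq> f (flip x i)}) / 2 ^ n)"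

text \<open>Disjoint composition (f \<diamond> h) for f on k variables and h on l variables;
  the i-th block x^(i) consists of positions (i-1)l+1 .. il.\<close>
definition dcomp :: "nat \<Rightarrow> nat \<Rightarrow> (bool list \<Rightarrow> bool) \<Rightarrow> (bool list \<Rightarrow> bool) \<Rightarrow> bool list \<Rightarrow> bool" where
  "dcomp k l f h x = f (map (\<lambda>i. h (take l (drop (i * l) x))) [0..<k])"

definition resilient :: "nat \<Rightarrow> (bool list \<Rightarrow> bool) \<Rightarrow> nat \<Rightarrow> bool" where
  "resilient n f t \<longleftrightarrow> (\<forall>a\<in>vecs n. wt a \<le> t \<longrightarrow> walsh n f a = 0)"

definition plateaued :: "nat \<Rightarrow> (bool list \<Rightarrow> bool) \<Rightarrow> bool" where
  "plateaued n f \<longleftrightarrow> (\<exists>c. \<forall>a\<in>vecs n. walsh n f a \<in> {0, c, -c})"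

text \<open>g_b on n+1 variables [X_1,...,X_n,X_{n+1}]:
  (1 + X_{n+1}) g(X_n..X_1) + X_{n+1} (b + g(1+X_n,...,1+X_1)).\<close>
definition gb :: "nat \<Rightarrow> (bool list \<Rightarrow> bool) \<Rightarrow> bool \<Rightarrow> bool list \<Rightarrow> bool" where
  "gb n g b x = (if x ! n then (b \<noteq> g (map Not (take n x))) else g (take n x))"

definition a_coef :: "nat \<Rightarrow> (bool list \<Rightarrow> bool) \<Rightarrow> bool \<Rightarrow> nat \<Rightarrow> real" where
  "a_coef n g b i = Max {(walsh (n+1) (gb n g b) w)\<^sup>2 | w. w \<in> vecs (n+1) \<and> wt w = i}"

definition eps :: "nat \<Rightarrow> (bool list \<Rightarrow> bool) \<Rightarrow> bool \<Rightarrow> real" where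
  "eps n g b = (\<Sum>a\<in>{a \<in> vecs n. odd (wt a) \<noteq> b}. (walsh n g a)\<^sup>2)"

end

theory Submission
  imports Defs
begin


lemma finite_vecs[simp]: "finite (vecs n)"
proof -
  have "vecs n = {xs. set xs \<subseteq> UNIV \<and> length xs = n}" by (auto simp: vecs_def)
  thus ?thesis using finite_lists_length_eq[of "UNIV::bool set" n] by simp
qed

lemma vecs_Suc: "vecs (Suc n) = (\<lambda>(c,x). c#x) ` (UNIV \<times> vecs n)"
  by (auto simp: vecs_def image_iff length_Suc_conv)

lemma sum_vecs_Suc: "(\<Sum>x\<in>vecs (Suc n). (F x :: 'a::comm_monoid_add)) = (\<Sum>x\<in>vecs n. F (False#x)) + (\<Sum>x\<in>vecs n. F (True#x))"
proof -
  have "inj_on (\<lambda>(c,x). c#x) (UNIV \<times> vecs n)" by (auto simp: inj_on_def)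
  hence "(\<Sum>x\<in>vecs (Suc n). F x) = (\<Sum>p\<in>UNIV \<times> vecs n. F (fst p # snd p))"
    unfolding vecs_Suc by (subst sum.reindex) (auto simp: case_prod_beta)
  also have "\<dots> = (\<Sum>c\<in>UNIV. \<Sum>x\<in>vecs n. F (c#x))"
    by (simp add: sum.cartesian_product case_prod_beta)
  also have "\<dots> = (\<Sum>x\<in>vecs n. F (False#x)) + (\<Sum>x\<in>vecs n. F (True#x))"
    by (simp add: UNIV_bool add.commute)
  finally show ?thesis .
qed

lemma vecs_append: "vecs (m+n) = (\<lambda>(u,v). u@v) ` (vecs m \<times> vecs n)"
proof -
  have "x \<in> (\<lambda>(u,v). u@v) ` (vecs m \<times> vecs n)" if "length x = m+n" for x
    using that by (intro image_eqI[of _ _ "(take m x, drop m x)"]) (auto simp: vecs_def)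
  thus ?thesis by (auto simp: vecs_def)
qed

lemma sum_vecs_append: "(\<Sum>x\<in>vecs (m+n). (F x :: 'a::comm_monoid_add)) = (\<Sum>u\<in>vecs m. \<Sum>v\<in>vecs n. F (u@v))"
proof -
  have "inj_on (\<lambda>(u,v). u@v) (vecs m \<times> vecs n)" by (auto simp: inj_on_def vecs_def)
  hence "(\<Sum>x\<in>vecs (m+n). F x) = (\<Sum>p\<in>vecs m \<times> vecs n. F (fst p @ snd p))"
    unfolding vecs_append by (subst sum.reindex) (auto simp: case_prod_beta)
  also have "\<dots> = (\<Sum>u\<in>vecs m. \<Sum>v\<in>vecs n. F (u@v))"
    by (simp add: sum.cartesian_product case_prod_beta)
  finally show ?thesis .
qed

lemma vecs_1: "vecs (Suc 0) = {[False],[True]}"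
  by (auto simp: vecs_def length_Suc_conv)

lemma sum_vecs_snoc: "(\<Sum>x\<in>vecs (n+1). (F x :: 'a::comm_monoid_add)) = (\<Sum>u\<in>vecs n. F (u@[False]) + F (u@[True]))"
  by (subst sum_vecs_append, rule sum.cong, simp, simp add: vecs_1)

lemma card_vecs: "(\<Sum>x\<in>vecs n. (1::real)) = 2^n"
proof (induction n)
  case 0 show ?case by (simp add: vecs_def)
next
  case (Suc n) show ?case by (subst sum_vecs_Suc) (simp only: Suc, simp)
qed

lemma sgn01_xor: "sgn01 (a \<noteq> c) = sgn01 a * sgn01 c"
  by (simp add: sgn01_def)

lemma sgn01_xor'[simp]: "sgn01 (c = (\<not> d)) = sgn01 c * sgn01 d"
  by (simp add: sgn01_def)

lemma sgn01_sq[simp]: "sgn01 a * sgn01 a = 1" by (simp add: sgn01_def)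

lemma inner_Nil[simp]: "inner [] a = False" "inner x [] = False" by (auto simp: inner_def)
lemma inner_Cons[simp]: "inner (u#x) (v#a) = ((u \<and> v) \<noteq> inner x a)" by (auto simp: inner_def)

lemma inner_commute: "inner x a = inner a x"
proof (induction x arbitrary: a)
  case (Cons u x a) thus ?case by (cases a) auto
qed simp

lemma inner_append: "length u = length a \<Longrightarrow> inner (u@v) (a@c) = (inner u a \<noteq> inner v c)"
proof (induction u arbitrary: a)
  case (Cons x u a) then show ?case by (cases a) auto
qed simp

definition nz :: "bool list \<Rightarrow> bool" where "nz x = (True \<in> set x)"

lemma inner_nz: "\<not> nz a \<Longrightarrow> inner x a = False"
proof (induction x arbitrary: a)
  case (Cons u x a) thus ?case by (cases a) (auto simp: nz_def)
qed simp

lemma orth: "(\<Sum>x\<in>vecs (length a). sgn01 (inner x a)) = (if nz a then 0 else 2 ^ length a)"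
proof (induction a)
  case Nil then show ?case by (simp add: vecs_def nz_def sgn01_def)
next
  case (Cons c a)
  have "(\<Sum>x\<in>vecs (length (c#a)). sgn01 (inner x (c#a))) = (\<Sum>y\<in>vecs(length a). sgn01(inner y a)) + sgn01 c * (\<Sum>y\<in>vecs(length a). sgn01(inner y a))"
    by (simp add: sum_vecs_Suc sgn01_xor sum_distrib_left)
  then show ?case using Cons.IH by (cases c) (auto simp: sgn01_def nz_def)
qed

lemma nz_zero: "x \<in> vecs l \<Longrightarrow> \<not> nz x \<longleftrightarrow> x = replicate l False"
proof
  assume "x \<in> vecs l" "\<not> nz x" thus "x = replicate l False"
    by (auto simp: vecs_def nz_def) (metis (full_types) replicate_length_same)
next
  assume "x = replicate l False" thus "\<not> nz x" by (simp add: nz_def)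
qed

lemma wt_nz: "wt x = 0 \<longleftrightarrow> \<not> nz x" by (simp add: wt_def nz_def count_list_0_iff)




definition xr :: "bool list \<Rightarrow> bool list \<Rightarrow> bool list" where
  "xr x y = map2 (\<noteq>) x y"

lemma length_xr[simp]: "length (xr x y) = min (length x) (length y)"
  by (simp add: xr_def)

lemma xr_simps[simp]: "xr (u#x) (v#y) = (u\<noteq>v) # xr x y" "xr [] y = []" "xr x [] = []"
  by (auto simp: xr_def)

lemma xr_vecs[simp]: "x \<in> vecs n \<Longrightarrow> y \<in> vecs n \<Longrightarrow> xr x y \<in> vecs n"
  by (simp add: vecs_def)

lemma inner_xr: "length x = length y \<Longrightarrow> inner (xr x y) a = (inner x a \<noteq> inner y a)"
proof (induction x arbitrary: y a)
  case (Cons u x y a)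
  note IH = Cons.IH
  obtain v y' where y: "y = v#y'" "length x = length y'" using Cons.prems by (cases y) auto
  show ?case
  proof (cases a)
    case (Cons c a')
    thus ?thesis using y IH[OF y(2), of a'] by auto
  qed simp
qed simp

lemma nz_xr: "length x = length y \<Longrightarrow> length z = length x \<Longrightarrow> (\<not> nz (xr (xr x y) z)) = (y = xr x z)"
proof (induction x arbitrary: y z)
  case (Cons u x y z) thus ?case by (cases y; cases z) (auto simp: nz_def)
qed (simp add: nz_def)

lemma walsh_expand: "walsh n f a = (\<Sum>x\<in>vecs n. sgn01 (f x) * sgn01 (inner x a)) / 2^n"
  by (simp add: walsh_def sgn01_xor)

lemma orth2: "w \<in> vecs n \<Longrightarrow> (\<Sum>a\<in>vecs n. sgn01 (inner w a)) = (if nz w then 0 else 2 ^ n)"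
  using orth[of w] by (simp add: inner_commute vecs_def)

lemma autocorr:
  assumes z: "z \<in> vecs n"
  shows "(\<Sum>a\<in>vecs n. (walsh n f a)\<^sup>2 * sgn01 (inner z a)) =
         (\<Sum>x\<in>vecs n. sgn01 (f x) * sgn01 (f (xr x z))) / 2^n"
proof -
  define s where "s x = sgn01 (f x)" for x
  have sq: "(walsh n f a)\<^sup>2 * sgn01 (inner z a) =
     (\<Sum>x\<in>vecs n. \<Sum>y\<in>vecs n. s x * s y * sgn01 (inner (xr (xr x y) z) a)) / (2^n*2^n)" if "a \<in> vecs n" for a
  proof -
    have "(walsh n f a)\<^sup>2 = (\<Sum>x\<in>vecs n. s x * sgn01 (inner x a)) * (\<Sum>y\<in>vecs n. s y * sgn01 (inner y a)) / (2^n*2^n)"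
      by (simp add: walsh_expand power2_eq_square s_def)
    also have "\<dots> = (\<Sum>x\<in>vecs n. \<Sum>y\<in>vecs n. s x * s y * (sgn01 (inner x a) * sgn01 (inner y a))) / (2^n*2^n)"
      by (simp add: sum_product mult_ac)
    finally have "(walsh n f a)\<^sup>2 * sgn01 (inner z a) = (\<Sum>x\<in>vecs n. \<Sum>y\<in>vecs n. s x * s y * (sgn01 (inner x a) * sgn01 (inner y a)) * sgn01 (inner z a)) / (2^n*2^n)"
      by (simp add: sum_distrib_right)
    also have "\<dots> = (\<Sum>x\<in>vecs n. \<Sum>y\<in>vecs n. s x * s y * sgn01 (inner (xr (xr x y) z) a)) / (2^n*2^n)"
      using z by (intro arg_cong[where f="\<lambda>t. t / _"] sum.cong refl)
         (auto simp: inner_xr vecs_def sgn01_xor mult_ac)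
    finally show ?thesis .
  qed
  have "(\<Sum>a\<in>vecs n. (walsh n f a)\<^sup>2 * sgn01 (inner z a)) =
     (\<Sum>x\<in>vecs n. \<Sum>y\<in>vecs n. s x * s y * (\<Sum>a\<in>vecs n. sgn01 (inner (xr (xr x y) z) a))) / (2^n*2^n)"
  proof -
    have "(\<Sum>a\<in>vecs n. (walsh n f a)\<^sup>2 * sgn01 (inner z a)) =
      (\<Sum>a\<in>vecs n. (\<Sum>x\<in>vecs n. \<Sum>y\<in>vecs n. s x * s y * sgn01 (inner (xr (xr x y) z) a)) / (2^n*2^n))"
      by (rule sum.cong) (simp_all add: sq)
    also have "\<dots> = (\<Sum>a\<in>vecs n. \<Sum>x\<in>vecs n. \<Sum>y\<in>vecs n. s x * s y * sgn01 (inner (xr (xr x y) z) a)) / (2^n*2^n)"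
      by (simp add: sum_divide_distrib)
    also have "(\<Sum>a\<in>vecs n. \<Sum>x\<in>vecs n. \<Sum>y\<in>vecs n. s x * s y * sgn01 (inner (xr (xr x y) z) a)) =
       (\<Sum>x\<in>vecs n. \<Sum>a\<in>vecs n. \<Sum>y\<in>vecs n. s x * s y * sgn01 (inner (xr (xr x y) z) a))"
      by (rule sum.swap)
    also have "\<dots> = (\<Sum>x\<in>vecs n. \<Sum>y\<in>vecs n. \<Sum>a\<in>vecs n. s x * s y * sgn01 (inner (xr (xr x y) z) a))"
      by (rule sum.cong, simp, rule sum.swap)
    also have "\<dots> = (\<Sum>x\<in>vecs n. \<Sum>y\<in>vecs n. s x * s y * (\<Sum>a\<in>vecs n. sgn01 (inner (xr (xr x y) z) a)))"
      by (simp add: sum_distrib_left)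
    finally show ?thesis .
  qed
  also have "\<dots> = (\<Sum>x\<in>vecs n. \<Sum>y\<in>vecs n. if y = xr x z then s x * s y * 2^n else 0) / (2^n*2^n)"
  proof -
    have o: "(\<Sum>a\<in>vecs n. sgn01 (inner (xr (xr x y) z) a)) = (if y = xr x z then 2^n else 0)"
      if "x \<in> vecs n" "y \<in> vecs n" for x y
    proof -
      have "(\<Sum>a\<in>vecs n. sgn01 (inner (xr (xr x y) z) a)) = (if nz (xr (xr x y) z) then 0 else 2^n)"
        using that z by (intro orth2) simp
      also have "\<dots> = (if y = xr x z then 2^n else 0)"
        using that z nz_xr[of x y z] by (auto simp: vecs_def)
      finally show ?thesis .
    qed
    show ?thesis by (intro arg_cong[where f="\<lambda>t. t / _"] sum.cong refl) (simp add: o)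
  qed
  also have "\<dots> = (\<Sum>x\<in>vecs n. s x * s (xr x z) * 2^n) / (2^n*2^n)"
    using z by (intro arg_cong[where f="\<lambda>t. t / _"] sum.cong refl) (simp add: sum.delta)
  also have "\<dots> = (\<Sum>x\<in>vecs n. sgn01 (f x) * sgn01 (f (xr x z))) / 2^n"
    by (simp add: sum_distrib_right[symmetric] s_def)
  finally show ?thesis .
qed



lemma xr_zero: "length x = m \<Longrightarrow> xr x (replicate m False) = x"
  by (induction x arbitrary: m) auto

lemma card_vecs_nat: "card (vecs n) = 2^n"
  using card_vecs[of n] by simp

lemma parseval: "(\<Sum>a\<in>vecs n. (walsh n f a)\<^sup>2) = 1"
proof -
  have z: "replicate n False \<in> vecs n" by (simp add: vecs_def)
  have "(\<Sum>a\<in>vecs n. (walsh n f a)\<^sup>2) = (\<Sum>a\<in>vecs n. (walsh n f a)\<^sup>2 * sgn01 (inner (replicate n False) a))"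
    by (rule sum.cong) (simp_all add: inner_nz inner_commute[of "replicate _ _"] nz_def sgn01_def)
  also have "\<dots> = (\<Sum>x\<in>vecs n. sgn01 (f x) * sgn01 (f (xr x (replicate n False)))) / 2^n"
    by (rule autocorr[OF z])
  also have "\<dots> = (\<Sum>x\<in>vecs n. 1) / 2^n"
    by (rule arg_cong[where f="\<lambda>t. t/_"], rule sum.cong) (simp_all add: xr_zero vecs_def)
  finally show ?thesis by (simp add: card_vecs_nat)
qed

definition ev :: "nat \<Rightarrow> nat \<Rightarrow> bool list" where "ev n i = (replicate n False)[i := True]"

lemma flip_xr: "x \<in> vecs n \<Longrightarrow> i < n \<Longrightarrow> flip x i = xr x (ev n i)"
  by (rule nth_equalityI) (auto simp: flip_def xr_def ev_def vecs_def nth_list_update)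

lemma inner_ev: "i < length a \<Longrightarrow> inner (ev (length a) i) a = a ! i"
proof (induction a arbitrary: i)
  case (Cons c a i)
  show ?case
  proof (cases i)
    case 0 thus ?thesis by (simp add: ev_def inner_nz inner_commute[of "replicate _ _"] nz_def)
  next
    case (Suc j) thus ?thesis using Cons by (simp add: ev_def)
  qed
qed simp

lemma wt_sum: "real (wt a) = (\<Sum>i<length a. if a ! i then 1 else 0)"
  by (induction a) (auto simp del: sum.lessThan_Suc simp add: wt_def sum.lessThan_Suc_shift)

lemma inf_coord:
  assumes "i < n"
  shows "real (card {x \<in> vecs n. f x \<noteq> f (flip x i)}) / 2^n = (\<Sum>a\<in>vecs n. (walsh n f a)\<^sup>2 * (if a ! i then 1 else 0))"
proof -
  define C where "C = real (card {x \<in> vecs n. f x \<noteq> f (flip x i)})"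
  have e: "ev n i \<in> vecs n" by (simp add: ev_def vecs_def)
  have "(\<Sum>x\<in>vecs n. sgn01 (f x) * sgn01 (f (xr x (ev n i)))) = (\<Sum>x\<in>vecs n. 1 - 2 * (if f x \<noteq> f (flip x i) then 1 else 0))"
    using assms by (intro sum.cong refl) (auto simp: flip_xr sgn01_def)
  also have "\<dots> = 2^n - 2 * C"
  proof -
    have "(\<Sum>x\<in>vecs n. (if f x \<noteq> f (flip x i) then 1 else 0)) = (\<Sum>x\<in>{x \<in> vecs n. f x \<noteq> f (flip x i)}. (1::real))"
      by (rule sum.inter_filter[symmetric]) simp
    also have "\<dots> = C" by (simp add: C_def)
    finally have cc: "(\<Sum>x\<in>vecs n. (if f x \<noteq> f (flip x i) then 1 else 0)) = C" .
    show ?thesis by (simp only: sum_subtractf sum_distrib_left[symmetric] card_vecs cc)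
  qed
  finally have 1: "(\<Sum>x\<in>vecs n. sgn01 (f x) * sgn01 (f (xr x (ev n i)))) = 2^n - 2 * C" .
  have 2: "(\<Sum>a\<in>vecs n. (walsh n f a)\<^sup>2 * sgn01 (a ! i)) = (2^n - 2*C) / 2^n"
  proof -
    have "(\<Sum>a\<in>vecs n. (walsh n f a)\<^sup>2 * sgn01 (a ! i)) = (\<Sum>a\<in>vecs n. (walsh n f a)\<^sup>2 * sgn01 (inner (ev n i) a))"
    proof (intro sum.cong refl)
      fix a assume "a \<in> vecs n" hence "length a = n" by (simp add: vecs_def)
      thus "(walsh n f a)\<^sup>2 * sgn01 (a ! i) = (walsh n f a)\<^sup>2 * sgn01 (inner (ev n i) a)"
        using inner_ev[of i a] assms by simp
    qed
    thus ?thesis using autocorr[OF e, of f] 1 by simp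
  qed
  have "(\<Sum>a\<in>vecs n. (walsh n f a)\<^sup>2 * (if a ! i then 1 else 0)) =
        (\<Sum>a\<in>vecs n. ((walsh n f a)\<^sup>2 - (walsh n f a)\<^sup>2 * sgn01 (a ! i)) / 2)"
    by (intro sum.cong refl) (simp add: sgn01_def)
  also have "\<dots> = (1 - (2^n - 2*C) / 2^n) / 2"
    by (simp add: sum_divide_distrib[symmetric] sum_subtractf parseval 2)
  also have "\<dots> = C / 2^n" by (simp add: field_simps)
  finally show ?thesis by (simp add: C_def)
qed

lemma influence_walsh: "influence n f = (\<Sum>a\<in>vecs n. real (wt a) * (walsh n f a)\<^sup>2)"
proof -
  have "influence n f = (\<Sum>i<n. \<Sum>a\<in>vecs n. (walsh n f a)\<^sup>2 * (if a ! i then 1 else 0))"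
    unfolding influence_def by (intro sum.cong refl inf_coord) simp
  also have "\<dots> = (\<Sum>a\<in>vecs n. \<Sum>i<n. (walsh n f a)\<^sup>2 * (if a ! i then 1 else 0))"
    by (rule sum.swap)
  also have "\<dots> = (\<Sum>a\<in>vecs n. real (wt a) * (walsh n f a)\<^sup>2)"
  proof (intro sum.cong refl)
    fix a assume "a \<in> vecs n" hence l: "length a = n" by (simp add: vecs_def)
    show "(\<Sum>i<n. (walsh n f a)\<^sup>2 * (if a ! i then 1 else 0)) = real (wt a) * (walsh n f a)\<^sup>2"
      using sum_distrib_left[of "(walsh n f a)\<^sup>2" "\<lambda>i. if a ! i then 1 else 0" "{..<n}"]
      by (simp add: wt_sum l mult.commute)
  qed
  finally show ?thesis .
qed



lemma inner_not: "length z = length a \<Longrightarrow> inner (map Not z) a = (inner z a \<noteq> odd (wt a))"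
proof (induction z arbitrary: a)
  case (Cons u z a)
  then obtain c a' where a: "a = c # a'" "length z = length a'" by (cases a) auto
  show ?case using Cons.IH[OF a(2)] a by (auto simp: wt_def)
qed (simp add: wt_def)

lemma sum_not: "(\<Sum>y\<in>vecs n. (F (map Not y) :: real)) = (\<Sum>y\<in>vecs n. F y)"
  by (rule sum.reindex_bij_witness[where i="map Not" and j="map Not"]) (auto simp: vecs_def comp_def)

lemma walsh_gb:
  assumes a: "a \<in> vecs n"
  shows "walsh (n+1) (gb n g b) (a @ [c]) = (if c = (b \<noteq> odd (wt a)) then walsh n g a else 0)"
proof -
  define S where "S = (\<Sum>y\<in>vecs n. sgn01 (g y) * sgn01 (inner y a))"
  have la: "length a = n" using a by (simp add: vecs_def)
  have "(\<Sum>x\<in>vecs (n+1). sgn01 (gb n g b x) * sgn01 (inner x (a@[c]))) =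
        (\<Sum>y\<in>vecs n. sgn01 (g y) * sgn01 (inner y a) +
            sgn01 b * sgn01 c * (sgn01 (g (map Not y)) * sgn01 (inner y a)))"
    by (subst sum_vecs_snoc, rule sum.cong, simp)
       (auto simp: gb_def vecs_def inner_append la sgn01_xor nth_append)
  also have "\<dots> = S + sgn01 b * sgn01 c * (\<Sum>y\<in>vecs n. sgn01 (g (map Not y)) * sgn01 (inner y a))"
    by (simp add: sum.distrib sum_distrib_left S_def)
  also have "(\<Sum>y\<in>vecs n. sgn01 (g (map Not y)) * sgn01 (inner y a)) =
             (\<Sum>y\<in>vecs n. sgn01 (g (map Not y)) * sgn01 (inner (map Not (map Not y)) a))"
    by (simp add: comp_def)
  also have "\<dots> = (\<Sum>y\<in>vecs n. sgn01 (g y) * sgn01 (inner (map Not y) a))"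
    by (rule sum_not[of "\<lambda>y. sgn01 (g y) * sgn01 (inner (map Not y) a)"])
  also have "\<dots> = sgn01 (odd (wt a)) * S"
    unfolding S_def sum_distrib_left
    by (rule sum.cong) (auto simp: inner_not vecs_def la sgn01_def)
  finally have fin: "(\<Sum>x\<in>vecs (n+1). sgn01 (gb n g b x) * sgn01 (inner x (a@[c]))) =
     S * (1 + sgn01 b * sgn01 c * sgn01 (odd (wt a)))" by (simp add: algebra_simps)
  moreover have "walsh n g a = S / 2^n" by (simp add: walsh_expand S_def)
  ultimately have "walsh (n+1) (gb n g b) (a @ [c]) = walsh n g a * ((1 + sgn01 b * sgn01 c * sgn01 (odd (wt a))) / 2)"
    unfolding walsh_expand[of "n+1"] fin by simp
  thus ?thesis by (cases b; cases c; cases "odd (wt a)") (simp_all add: sgn01_def)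
qed



definition LS :: "nat \<Rightarrow> nat \<Rightarrow> bool list list set" where
  "LS k l = {xs. set xs \<subseteq> vecs l \<and> length xs = k}"

lemma finite_LS[simp]: "finite (LS k l)"
  unfolding LS_def by (rule finite_lists_length_eq) simp

lemma LS_Suc: "LS (Suc k) l = (\<lambda>(x,xs). x#xs) ` (vecs l \<times> LS k l)"
  by (auto simp: LS_def image_iff length_Suc_conv)

lemma sum_LS_Suc: "(\<Sum>xs\<in>LS (Suc k) l. (F xs :: 'a::comm_monoid_add)) = (\<Sum>x\<in>vecs l. \<Sum>xs\<in>LS k l. F (x#xs))"
proof -
  have "inj_on (\<lambda>(x,xs). x#xs) (vecs l \<times> LS k l)" by (auto simp: inj_on_def)
  hence "(\<Sum>xs\<in>LS (Suc k) l. F xs) = (\<Sum>p\<in>vecs l \<times> LS k l. F (fst p # snd p))"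
    unfolding LS_Suc by (subst sum.reindex) (auto simp: case_prod_beta)
  also have "\<dots> = (\<Sum>x\<in>vecs l. \<Sum>xs\<in>LS k l. F (x#xs))"
    by (simp add: sum.cartesian_product case_prod_beta)
  finally show ?thesis .
qed

lemma LS_0: "LS 0 l = {[]}" by (auto simp: LS_def)

lemma sum_concat: "(\<Sum>a\<in>vecs (k*l). (F a :: 'a::comm_monoid_add)) = (\<Sum>xs\<in>LS k l. F (concat xs))"
proof (induction k arbitrary: F)
  case 0 show ?case by (simp add: LS_0 vecs_def)
next
  case (Suc k F)
  have "(\<Sum>a\<in>vecs (Suc k * l). F a) = (\<Sum>u\<in>vecs l. \<Sum>v\<in>vecs (k*l). F (u@v))"
    using sum_vecs_append[of F l "k*l"] by simp
  also have "\<dots> = (\<Sum>u\<in>vecs l. \<Sum>xs\<in>LS k l. F (u @ concat xs))"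
    using Suc.IH by simp
  also have "\<dots> = (\<Sum>xs\<in>LS (Suc k) l. F (concat xs))"
    by (simp add: sum_LS_Suc)
  finally show ?case .
qed

lemma concat_LS: "xs \<in> LS k l \<Longrightarrow> concat xs \<in> vecs (k*l)"
proof (induction xs arbitrary: k)
  case (Cons x xs k) thus ?case by (cases k) (auto simp: LS_def vecs_def)
qed (simp add: LS_def vecs_def)

lemma blocks_concat: "set xs \<subseteq> vecs l \<Longrightarrow> i < length xs \<Longrightarrow> take l (drop (i*l) (concat xs)) = xs ! i"
proof (induction xs arbitrary: i)
  case (Cons x xs i)
  have lx: "length x = l" using Cons.prems by (simp add: vecs_def)
  show ?case
  proof (cases i)
    case 0 thus ?thesis using lx by simp
  next
    case (Suc j)
    have "drop (i*l) (concat (x#xs)) = drop (j*l) (concat xs)" using lx Suc by (simp add: add.commute)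
    thus ?thesis using Cons Suc by simp
  qed
qed simp

lemma dcomp_concat: "xs \<in> LS k l \<Longrightarrow> dcomp k l f h (concat xs) = f (map h xs)"
  unfolding dcomp_def
  by (rule arg_cong[where f=f], rule nth_equalityI) (auto simp: LS_def blocks_concat)

lemma inner_concat: "xs \<in> LS k l \<Longrightarrow> as \<in> LS k l \<Longrightarrow>
   sgn01 (inner (concat xs) (concat as)) = prod_list (map2 (\<lambda>x a. sgn01 (inner x a)) xs as)"
proof (induction xs arbitrary: k as)
  case Nil thus ?case by (simp add: LS_def sgn01_def)
next
  case (Cons x xs k as)
  then obtain k' where k: "k = Suc k'" by (cases k) (auto simp: LS_def)
  then obtain a as' where as: "as = a # as'" using Cons.prems by (cases as) (auto simp: LS_def)
  have "xs \<in> LS k' l" "as' \<in> LS k' l" "length x = length a"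
    using Cons.prems k as by (auto simp: LS_def vecs_def)
  thus ?case using Cons.IH as by (simp add: inner_append sgn01_xor)
qed



definition chi :: "bool list \<Rightarrow> bool list \<Rightarrow> real" where "chi x a = sgn01 (inner x a)"

definition Sblk :: "(bool list \<Rightarrow> bool) \<Rightarrow> nat \<Rightarrow> bool \<Rightarrow> bool list \<Rightarrow> real" where
  "Sblk h l c a = (\<Sum>x\<in>vecs l. if h x = c then chi x a else 0)"

lemma split_h: "(\<Sum>x\<in>vecs l. chi x a * R (h x)) = Sblk h l False a * R False + Sblk h l True a * R True"
proof -
  have "(\<Sum>x\<in>vecs l. chi x a * R (h x)) =
    (\<Sum>x\<in>vecs l. (if h x = False then chi x a else 0) * R False + (if h x = True then chi x a else 0) * R True)"
    by (rule sum.cong) auto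
  thus ?thesis by (simp add: Sblk_def sum.distrib sum_distrib_right)
qed

lemma grouping:
  "length as = k \<Longrightarrow>
   (\<Sum>xs\<in>LS k l. F (map h xs) * prod_list (map2 chi xs as)) =
   (\<Sum>y\<in>vecs k. F y * prod_list (map2 (Sblk h l) y as))"
proof (induction k arbitrary: F as)
  case 0 thus ?case by (simp add: LS_0 vecs_def)
next
  case (Suc k F as)
  then obtain a as' where as: "as = a # as'" "length as' = k" by (cases as) auto
  have "(\<Sum>xs\<in>LS (Suc k) l. F (map h xs) * prod_list (map2 chi xs as)) =
      (\<Sum>x\<in>vecs l. chi x a * (\<Sum>xs\<in>LS k l. F (h x # map h xs) * prod_list (map2 chi xs as')))"
    by (simp add: sum_LS_Suc as sum_distrib_left mult_ac)
  also have "\<dots> = (\<Sum>x\<in>vecs l. chi x a * (\<Sum>y\<in>vecs k. F (h x # y) * prod_list (map2 (Sblk h l) y as')))"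
  proof (rule sum.cong)
    fix x show "chi x a * (\<Sum>xs\<in>LS k l. F (h x # map h xs) * prod_list (map2 chi xs as')) =
       chi x a * (\<Sum>y\<in>vecs k. F (h x # y) * prod_list (map2 (Sblk h l) y as'))"
      using Suc.IH[OF as(2), of "\<lambda>y. F (h x # y)"] by simp
  qed simp
  also have "\<dots> = Sblk h l False a * (\<Sum>y\<in>vecs k. F (False # y) * prod_list (map2 (Sblk h l) y as'))
               + Sblk h l True a * (\<Sum>y\<in>vecs k. F (True # y) * prod_list (map2 (Sblk h l) y as'))"
    by (rule split_h)
  also have "\<dots> = (\<Sum>y\<in>vecs (Suc k). F y * prod_list (map2 (Sblk h l) y as))"
    by (simp add: sum_vecs_Suc as sum_distrib_left mult_ac)
  finally show ?case .
qed

lemma balanced_zero: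
  assumes "balanced l h"
  shows "walsh l h (replicate l False) = 0"
proof -
  have "(\<Sum>x\<in>vecs l. sgn01 (h x)) = (\<Sum>x\<in>vecs l. 1 - 2 * (if h x then 1 else 0))"
    by (rule sum.cong) (auto simp: sgn01_def)
  also have "\<dots> = 2^l - 2 * real (card {x \<in> vecs l. h x})"
  proof -
    have "(\<Sum>x\<in>vecs l. (if h x then 1 else 0)) = (\<Sum>x\<in>{x \<in> vecs l. h x}. (1::real))"
      by (rule sum.inter_filter[symmetric]) simp
    thus ?thesis by (simp only: sum_subtractf sum_distrib_left[symmetric] card_vecs) simp
  qed
  also have "\<dots> = 0" using assms unfolding balanced_def
    by (metis (mono_tags, lifting) cancel_comm_monoid_add_class.diff_cancel of_nat_mult of_nat_numeral of_nat_power)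
  finally have "(\<Sum>x\<in>vecs l. sgn01 (h x)) = 0" .
  moreover have "walsh l h (replicate l False) = (\<Sum>x\<in>vecs l. sgn01 (h x)) / 2^l"
    unfolding walsh_expand
    by (rule arg_cong[where f="\<lambda>t. t / _"], rule sum.cong)
      (simp_all add: inner_nz nz_def sgn01_def)
  ultimately show ?thesis by simp
qed

definition phi :: "(bool list \<Rightarrow> bool) \<Rightarrow> nat \<Rightarrow> bool list \<Rightarrow> real" where
  "phi h l a = (if nz a then walsh l h a else 1)"

lemma Sblk_eval:
  assumes "balanced l h" "a \<in> vecs l"
  shows "Sblk h l c a = 2^l / 2 * (sgn01 (c \<and> nz a) * phi h l a)"
proof -
  have la: "length a = l" using assms by (simp add: vecs_def)
  have "Sblk h l c a = (\<Sum>x\<in>vecs l. (chi x a + sgn01 c * (sgn01 (h x) * chi x a)) / 2)"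
    unfolding Sblk_def by (rule sum.cong) (auto simp: sgn01_def)
  also have "\<dots> = ((\<Sum>x\<in>vecs l. chi x a) + sgn01 c * (2^l * walsh l h a)) / 2"
    by (simp add: sum_divide_distrib[symmetric] sum.distrib sum_distrib_left[symmetric] walsh_expand chi_def)
  also have "(\<Sum>x\<in>vecs l. chi x a) = (if nz a then 0 else 2^l)"
    using orth[of a] la by (simp add: chi_def)
  finally have *: "Sblk h l c a = ((if nz a then 0 else 2^l) + sgn01 c * (2^l * walsh l h a)) / 2" .
  show ?thesis
  proof (cases "nz a")
    case True thus ?thesis using * by (simp add: phi_def sgn01_def)
  next
    case False
    hence "a = replicate l False" using nz_zero assms(2) by blast
    hence "walsh l h a = 0" using balanced_zero[OF assms(1)] by simp
    thus ?thesis using * False by (simp add: phi_def sgn01_def)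
  qed
qed

lemma prod_Sblk:
  assumes "balanced l h"
  shows "as \<in> LS k l \<Longrightarrow> y \<in> vecs k \<Longrightarrow>
    prod_list (map2 (Sblk h l) y as) = (2^l/2)^k * (sgn01 (inner y (map nz as)) * prod_list (map (phi h l) as))"
proof (induction as arbitrary: k y)
  case Nil thus ?case by (simp add: LS_def vecs_def sgn01_def)
next
  case (Cons a as k y)
  then obtain k' where k: "k = Suc k'" by (cases k) (auto simp: LS_def)
  then obtain c y' where y: "y = c # y'" using Cons.prems by (cases y) (auto simp: vecs_def)
  have "as \<in> LS k' l" "y' \<in> vecs k'" "a \<in> vecs l"
    using Cons.prems k y by (auto simp: LS_def vecs_def)
  thus ?case using Cons.IH y k Sblk_eval[OF assms] by (simp add: sgn01_xor mult_ac)
qed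

lemma walsh_comp:
  assumes "balanced l h" "as \<in> LS k l"
  shows "walsh (k*l) (dcomp k l f h) (concat as) = walsh k f (map nz as) * prod_list (map (phi h l) as)"
proof -
  define P where "P = prod_list (map (phi h l) as)"
  have "length as = k" using assms by (simp add: LS_def)
  have "(\<Sum>x\<in>vecs (k*l). sgn01 (dcomp k l f h x) * sgn01 (inner x (concat as))) =
        (\<Sum>xs\<in>LS k l. sgn01 (f (map h xs)) * prod_list (map2 chi xs as))"
    by (subst sum_concat, rule sum.cong) (simp_all add: dcomp_concat inner_concat assms chi_def[abs_def])
  also have "\<dots> = (\<Sum>y\<in>vecs k. sgn01 (f y) * prod_list (map2 (Sblk h l) y as))"
    by (rule grouping) fact
  also have "\<dots> = (\<Sum>y\<in>vecs k. (2^l/2)^k * P * (sgn01 (f y) * sgn01 (inner y (map nz as))))"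
  proof (rule sum.cong)
    fix y assume "y \<in> vecs k"
    thus "sgn01 (f y) * prod_list (map2 (Sblk h l) y as) = (2^l/2)^k * P * (sgn01 (f y) * sgn01 (inner y (map nz as)))"
      using prod_Sblk[OF assms(1) assms(2) \<open>y \<in> vecs k\<close>] by (simp add: P_def mult_ac)
  qed simp
  also have "\<dots> = (2^l/2)^k * P * (2^k * walsh k f (map nz as))"
    by (simp add: sum_distrib_left[symmetric] walsh_expand)
  finally have "walsh (k*l) (dcomp k l f h) (concat as) = (2^l/2)^k * P * (2^k * walsh k f (map nz as)) / 2^(k*l)"
    by (simp add: walsh_expand)
  also have "\<dots> = walsh k f (map nz as) * P"
    by (simp add: power_divide power_mult[symmetric] mult.commute[of l k] field_simps)
  finally show ?thesis by (simp add: P_def)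
qed



lemma wt_Cons[simp]: "wt (c # w) = (if c then 1 else 0) + wt w" by (simp add: wt_def)
lemma wt_Nil[simp]: "wt [] = 0" by (simp add: wt_def)
lemma wt_append: "wt (u @ v) = wt u + wt v" by (simp add: wt_def)
lemma wt_concat: "wt (concat as) = sum_list (map wt as)"
  by (induction as) (simp_all add: wt_append)

lemma prod_sq: "(prod_list (map (p :: _ \<Rightarrow> real) as))\<^sup>2 = prod_list (map (\<lambda>a. (p a)\<^sup>2) as)"
proof (induction as)
  case (Cons a as)
  have "(prod_list (map p (a#as)))\<^sup>2 = (p a)\<^sup>2 * (prod_list (map p as))\<^sup>2"
    by (simp only: list.map prod_list.Cons power_mult_distrib)
  thus ?case using Cons by simp
qed simp

context
  fixes g :: "bool list \<Rightarrow> bool" and l :: nat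
  assumes bal: "balanced l g"
begin

definition psi where "psi a = (phi g l a)\<^sup>2"

lemma walsh_not_nz: "a \<in> vecs l \<Longrightarrow> \<not> nz a \<Longrightarrow> walsh l g a = 0"
  using nz_zero balanced_zero[OF bal] by blast

lemma psi1: "(\<Sum>a\<in>vecs l. psi a * R (nz a)) = R False + (R True :: real)"
proof -
  have "(\<Sum>a\<in>vecs l. psi a * R (nz a)) =
     (\<Sum>a\<in>vecs l. (walsh l g a)\<^sup>2 * R True + (if a = replicate l False then R False else 0))"
  proof (rule sum.cong)
    fix a assume a: "a \<in> vecs l"
    show "psi a * R (nz a) = (walsh l g a)\<^sup>2 * R True + (if a = replicate l False then R False else 0)"
      using a walsh_not_nz[OF a] nz_zero[OF a] by (cases "nz a") (auto simp: psi_def phi_def)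
  qed simp
  also have "\<dots> = R True + R False"
  proof -
    have z: "replicate l False \<in> vecs l" by (simp add: vecs_def)
    show ?thesis by (simp add: sum.distrib sum_distrib_right[symmetric] parseval sum.delta z)
  qed
  finally show ?thesis by simp
qed

lemma psi2: "(\<Sum>a\<in>vecs l. psi a * real (wt a) * R (nz a)) = influence l g * (R True :: real)"
proof -
  have "(\<Sum>a\<in>vecs l. psi a * real (wt a) * R (nz a)) =
     (\<Sum>a\<in>vecs l. real (wt a) * (walsh l g a)\<^sup>2 * R True)"
  proof (rule sum.cong)
    fix a assume a: "a \<in> vecs l"
    show "psi a * real (wt a) * R (nz a) = real (wt a) * (walsh l g a)\<^sup>2 * R True"
      using a walsh_not_nz[OF a] wt_nz[of a] by (cases "nz a") (auto simp: psi_def phi_def)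
  qed simp
  thus ?thesis by (simp add: sum_distrib_right[symmetric] influence_walsh)
qed

lemma S1: "(\<Sum>as\<in>LS k l. Q (map nz as) * prod_list (map psi as)) = (\<Sum>w\<in>vecs k. (Q w :: real))"
proof (induction k arbitrary: Q)
  case 0 thus ?case by (simp add: LS_0 vecs_def)
next
  case (Suc k Q)
  have "(\<Sum>as\<in>LS (Suc k) l. Q (map nz as) * prod_list (map psi as)) =
        (\<Sum>a\<in>vecs l. psi a * (\<Sum>as\<in>LS k l. Q (nz a # map nz as) * prod_list (map psi as)))"
    by (simp add: sum_LS_Suc sum_distrib_left mult_ac)
  also have "\<dots> = (\<Sum>a\<in>vecs l. psi a * (\<Sum>w\<in>vecs k. Q (nz a # w)))"
  proof (rule sum.cong)
    fix a show "psi a * (\<Sum>as\<in>LS k l. Q (nz a # map nz as) * prod_list (map psi as)) = psi a * (\<Sum>w\<in>vecs k. Q (nz a # w))"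
      using Suc.IH[of "\<lambda>w. Q (nz a # w)"] by simp
  qed simp
  also have "\<dots> = (\<Sum>w\<in>vecs k. Q (False # w)) + (\<Sum>w\<in>vecs k. Q (True # w))"
    by (rule psi1)
  finally show ?case by (simp add: sum_vecs_Suc)
qed

lemma S2: "(\<Sum>as\<in>LS k l. real (sum_list (map wt as)) * Q (map nz as) * prod_list (map psi as)) =
   influence l g * (\<Sum>w\<in>vecs k. real (wt w) * (Q w :: real))"
proof (induction k arbitrary: Q)
  case 0 thus ?case by (simp add: LS_0 vecs_def)
next
  case (Suc k Q)
  have "(\<Sum>as\<in>LS (Suc k) l. real (sum_list (map wt as)) * Q (map nz as) * prod_list (map psi as)) =
        (\<Sum>a\<in>vecs l. psi a * real (wt a) * (\<Sum>as\<in>LS k l. Q (nz a # map nz as) * prod_list (map psi as)))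
      + (\<Sum>a\<in>vecs l. psi a * (\<Sum>as\<in>LS k l. real (sum_list (map wt as)) * Q (nz a # map nz as) * prod_list (map psi as)))"
    by (simp add: sum_LS_Suc sum_distrib_left algebra_simps sum.distrib)
  also have "(\<Sum>a\<in>vecs l. psi a * real (wt a) * (\<Sum>as\<in>LS k l. Q (nz a # map nz as) * prod_list (map psi as)))
      = (\<Sum>a\<in>vecs l. psi a * real (wt a) * (\<Sum>w\<in>vecs k. Q (nz a # w)))"
  proof (rule sum.cong)
    fix a show "psi a * real (wt a) * (\<Sum>as\<in>LS k l. Q (nz a # map nz as) * prod_list (map psi as)) = psi a * real (wt a) * (\<Sum>w\<in>vecs k. Q (nz a # w))"
      using S1[where k=k and Q="\<lambda>w. Q (nz a # w)"] by simp
  qed simp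
  also have "\<dots> = influence l g * (\<Sum>w\<in>vecs k. Q (True # w))"
    by (rule psi2)
  also have "(\<Sum>a\<in>vecs l. psi a * (\<Sum>as\<in>LS k l. real (sum_list (map wt as)) * Q (nz a # map nz as) * prod_list (map psi as)))
     = (\<Sum>a\<in>vecs l. psi a * (influence l g * (\<Sum>w\<in>vecs k. real (wt w) * Q (nz a # w))))"
  proof (rule sum.cong)
    fix a show "psi a * (\<Sum>as\<in>LS k l. real (sum_list (map wt as)) * Q (nz a # map nz as) * prod_list (map psi as)) = psi a * (influence l g * (\<Sum>w\<in>vecs k. real (wt w) * Q (nz a # w)))"
      using Suc.IH[of "\<lambda>w. Q (nz a # w)"] by simp
  qed simp
  also have "\<dots> = influence l g * (\<Sum>w\<in>vecs k. real (wt w) * Q (False # w)) + influence l g * (\<Sum>w\<in>vecs k. real (wt w) * Q (True # w))"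
    by (rule psi1)
  finally show ?case by (simp add: sum_vecs_Suc algebra_simps sum.distrib)
qed

lemma influence_comp: "influence (k*l) (dcomp k l f g) = influence l g * influence k f"
proof -
  have "influence (k*l) (dcomp k l f g) = (\<Sum>a\<in>vecs (k*l). real (wt a) * (walsh (k*l) (dcomp k l f g) a)\<^sup>2)"
    by (rule influence_walsh)
  also have "\<dots> = (\<Sum>as\<in>LS k l. real (sum_list (map wt as)) * (walsh k f (map nz as))\<^sup>2 * prod_list (map psi as))"
    by (subst sum_concat, rule sum.cong)
       (simp_all add: walsh_comp[OF bal] wt_concat power_mult_distrib prod_sq psi_def[abs_def])
  also have "\<dots> = influence l g * influence k f"
    using S2[where k=k and Q="\<lambda>w. (walsh k f w)\<^sup>2"] by (simp add: influence_walsh)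
  finally show ?thesis .
qed

end

lemma walsh_gb': "a \<in> vecs n \<Longrightarrow> walsh (Suc n) (gb n g b) (a @ [c]) = (if c = (b \<noteq> odd (wt a)) then walsh n g a else 0)"
  using walsh_gb[of a n g b c] by simp

lemma influence_gb:
  "influence (n+1) (gb n g b) = influence n g + eps n g b"
proof -
  have "influence (n+1) (gb n g b) = (\<Sum>w\<in>vecs (n+1). real (wt w) * (walsh (n+1) (gb n g b) w)\<^sup>2)"
    by (rule influence_walsh)
  also have "\<dots> = (\<Sum>a\<in>vecs n. real (wt a) * (walsh n g a)\<^sup>2 + (if odd (wt a) \<noteq> b then (walsh n g a)\<^sup>2 else 0))"
    by (subst sum_vecs_snoc, rule sum.cong, simp) (auto simp: walsh_gb' wt_append algebra_simps)
  also have "\<dots> = influence n g + eps n g b"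
    by (simp add: sum.distrib influence_walsh eps_def sum.inter_filter)
  finally show ?thesis .
qed



lemma vecs_concat_ex: "a \<in> vecs (k*l) \<Longrightarrow> \<exists>as\<in>LS k l. a = concat as"
proof (induction k arbitrary: a)
  case 0 thus ?case by (auto simp: vecs_def LS_def)
next
  case (Suc k a)
  have "drop l a \<in> vecs (k*l)" using Suc.prems by (simp add: vecs_def)
  then obtain as where as: "as \<in> LS k l" "drop l a = concat as" using Suc.IH by blast
  have "take l a # as \<in> LS (Suc k) l" using as Suc.prems by (auto simp: LS_def vecs_def)
  moreover have "a = concat (take l a # as)" using as by (metis append_take_drop_id concat.simps(2))
  ultimately show ?case by blast
qed

lemma prod_phi_ge:
  assumes Hle: "\<And>a. a \<in> vecs l \<Longrightarrow> walsh l g a \<noteq> 0 \<Longrightarrow> H \<le> log 2 (1 / (walsh l g a)\<^sup>2)"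
  shows "set as \<subseteq> vecs l \<Longrightarrow> prod_list (map (phi g l) as) \<noteq> 0 \<Longrightarrow>
     real (wt (map nz as)) * H \<le> - log 2 ((prod_list (map (phi g l) as))\<^sup>2)"
proof (induction as)
  case Nil thus ?case by simp
next
  case (Cons a as)
  have pa: "phi g l a \<noteq> 0" and pr: "prod_list (map (phi g l) as) \<noteq> 0" using Cons.prems by auto
  have IH: "real (wt (map nz as)) * H \<le> - log 2 ((prod_list (map (phi g l) as))\<^sup>2)"
    using Cons.IH Cons.prems pr by simp
  have eq: "- log 2 ((prod_list (map (phi g l) (a#as)))\<^sup>2) =
        - log 2 ((phi g l a)\<^sup>2) - log 2 ((prod_list (map (phi g l) as))\<^sup>2)"
    using pa pr by (simp add: power_mult_distrib log_mult_pos)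
  moreover have bd: "(if nz a then 1 else 0) * H \<le> - log 2 ((phi g l a)\<^sup>2)"
  proof (cases "nz a")
    case True
    hence "phi g l a = walsh l g a" by (simp add: phi_def)
    thus ?thesis using True Hle[of a] pa Cons.prems by (simp add: log_recip)
  next
    case False thus ?thesis by (simp add: phi_def)
  qed
  moreover have "real (wt (map nz (a#as))) * H = (if nz a then 1 else 0) * H + real (wt (map nz as)) * H"
    by (simp add: algebra_simps)
  ultimately show ?case using IH by linarith
qed

lemma prod_phi_star:
  assumes "nz s"
  shows "prod_list (map (phi g l) (map (\<lambda>c. if c then s else replicate l False) w)) = (walsh l g s) ^ (wt w)"
proof -
  have "True \<in> set s" using assms by (simp add: nz_def)
  thus ?thesis by (induction w) (auto simp: phi_def nz_def)
qed

lemma map_nz_star: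
  assumes "nz s"
  shows "map nz (map (\<lambda>c. if c then s else replicate l False) w) = w"
proof -
  have "True \<in> set s" using assms by (simp add: nz_def)
  thus ?thesis by (induction w) (auto simp: nz_def)
qed



lemma wt_replicate: "wt (replicate i c) = (if c then i else 0)"
  by (induction i) auto

theorem theorem6:
  fixes n :: nat and g :: "bool list \<Rightarrow> bool" and b :: bool
  assumes "balanced n g"
  defines "G \<equiv> dcomp (n+1) n (gb n g b) g"
  shows "min_entropy (n*(n+1)) G / influence (n*(n+1)) G =
           Min {- log 2 (a_coef n g b i) + real i * min_entropy n g | i. i \<in> {0..n+1} \<and> a_coef n g b i > 0}
           / (influence n g * (influence n g + eps n g b))
     \<and> (\<forall>t::nat. t < n \<and> odd t = b \<and> plateaued n g \<and> resilient n g t \<and> \<not> resilient n g (t+1)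
         \<longrightarrow> min_entropy (n*(n+1)) G / influence (n*(n+1)) G =
             min_entropy n g / influence n g * ((real t + 3) / (influence n g + eps n g b)))"
proof -
  note bal = assms(1)
  define f where "f = gb n g b"
  define N where "N = n*(n+1)"
  have NN: "N = (n+1)*n" by (simp add: N_def)
  define I where "I = influence n g"
  define H where "H = min_entropy n g"
  have infG: "influence N G = I * (I + eps n g b)"
    unfolding NN G_def I_def using influence_comp[OF bal, of "n+1" "gb n g b"] influence_gb[of n g b]
    by simp
  have wG: "walsh N G (concat as) = walsh (n+1) f (map nz as) * prod_list (map (phi g n) as)"
    if "as \<in> LS (n+1) n" for as
    unfolding NN G_def f_def using walsh_comp[OF bal that] by simp
  define Sg where "Sg = {log 2 (1 / (walsh n g a)\<^sup>2) | a. a \<in> vecs n \<and> (walsh n g a)\<^sup>2 \<noteq> 0}"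
  have HSg: "H = Min Sg" by (simp add: H_def Sg_def min_entropy_def)
  have finSg: "finite Sg" unfolding Sg_def by (rule finite_image_set) simp
  have "\<exists>a\<in>vecs n. (walsh n g a)\<^sup>2 \<noteq> 0"
  proof (rule ccontr)
    assume "\<not> ?thesis"
    hence "(\<Sum>a\<in>vecs n. (walsh n g a)\<^sup>2) = 0" by simp
    thus False using parseval[of n g] by simp
  qed
  hence neSg: "Sg \<noteq> {}" by (auto simp: Sg_def)
  obtain astar where astar: "astar \<in> vecs n" "(walsh n g astar)\<^sup>2 \<noteq> 0" "H = log 2 (1 / (walsh n g astar)\<^sup>2)"
    using Min_in[OF finSg neSg] unfolding HSg[symmetric] by (auto simp: Sg_def)
  have Hle: "H \<le> log 2 (1 / (walsh n g a)\<^sup>2)" if "a \<in> vecs n" "walsh n g a \<noteq> 0" for a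
    unfolding HSg using that finSg by (intro Min_le) (auto simp: Sg_def)
  have nzstar: "nz astar"
    using astar walsh_not_nz[OF bal] by auto
  define A where "A i = {(walsh (n+1) f w)\<^sup>2 | w. w \<in> vecs (n+1) \<and> wt w = i}" for i
  have aA: "a_coef n g b i = Max (A i)" for i by (simp add: a_coef_def A_def f_def)
  have finA: "finite (A i)" for i unfolding A_def by (rule finite_image_set) simp
  have Aw: "(walsh (n+1) f w)\<^sup>2 \<le> a_coef n g b (wt w)" if "w \<in> vecs (n+1)" for w
    unfolding aA using that finA by (intro Max_ge) (auto simp: A_def)
  have Ain: "\<exists>w\<in>vecs (n+1). wt w = i \<and> a_coef n g b i = (walsh (n+1) f w)\<^sup>2" if "i \<le> n+1" for i
  proof -
    have "replicate i True @ replicate (n+1-i) False \<in> vecs (n+1)" using that by (simp add: vecs_def)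
    moreover have "wt (replicate i True @ replicate (n+1-i) False) = i"
      by (simp add: wt_append wt_replicate)
    ultimately have "A i \<noteq> {}" by (auto simp: A_def)
    from Max_in[OF finA this] show ?thesis unfolding aA by (auto simp: A_def)
  qed
  define SG where "SG = {log 2 (1 / (walsh N G a)\<^sup>2) | a. a \<in> vecs N \<and> (walsh N G a)\<^sup>2 \<noteq> 0}"
  define T where "T = {- log 2 (a_coef n g b i) + real i * H | i. i \<in> {0..n+1} \<and> a_coef n g b i > 0}"
  have finSG: "finite SG" unfolding SG_def by (rule finite_image_set) simp
  have finT: "finite T" unfolding T_def by (rule finite_image_set) simp
  have "\<exists>a\<in>vecs N. (walsh N G a)\<^sup>2 \<noteq> 0"
  proof (rule ccontr)
    assume "\<not> ?thesis"
    hence "(\<Sum>a\<in>vecs N. (walsh N G a)\<^sup>2) = 0" by simp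
    thus False using parseval[of N G] by simp
  qed
  hence neSG: "SG \<noteq> {}" by (auto simp: SG_def)
  have claim1: "\<exists>t\<in>T. t \<le> s" if sS: "s \<in> SG" for s
  proof -
    obtain a where a: "a \<in> vecs N" "(walsh N G a)\<^sup>2 \<noteq> 0" "s = log 2 (1 / (walsh N G a)\<^sup>2)"
      using sS unfolding SG_def by blast
    obtain as where as: "as \<in> LS (n+1) n" "a = concat as"
      using vecs_concat_ex[of a "n+1" n] a(1) NN by auto
    define w where "w = map nz as"
    define P where "P = prod_list (map (phi g n) as)"
    have wv: "w \<in> vecs (n+1)" using as by (simp add: w_def vecs_def LS_def)
    have W: "walsh N G a = walsh (n+1) f w * P" using wG[OF as(1)] as by (simp add: w_def P_def)
    have Wf: "walsh (n+1) f w \<noteq> 0" and P0: "P \<noteq> 0" using a(2) W by auto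
    have ai: "(walsh (n+1) f w)\<^sup>2 \<le> a_coef n g b (wt w)" by (rule Aw[OF wv])
    have apos: "a_coef n g b (wt w) > 0" using ai Wf by (smt (verit) zero_less_power2)
    have iw: "wt w \<le> n+1" using wv count_le_length[of w True] by (simp add: vecs_def wt_def)
    have t: "- log 2 (a_coef n g b (wt w)) + real (wt w) * H \<in> T"
      unfolding T_def using iw apos by auto
    have bound: "real (wt w) * H \<le> - log 2 (P\<^sup>2)"
      unfolding w_def P_def
      by (rule prod_phi_ge[where H=H]) (use Hle as P0 in \<open>auto simp: LS_def P_def\<close>)
    have "s = - log 2 ((walsh (n+1) f w)\<^sup>2) - log 2 (P\<^sup>2)"
      using a(3) W Wf P0 by (simp add: log_recip power_mult_distrib log_mult_pos)
    moreover have "log 2 ((walsh (n+1) f w)\<^sup>2) \<le> log 2 (a_coef n g b (wt w))"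
      using ai Wf apos by (subst log_le_cancel_iff) auto
    ultimately have "- log 2 (a_coef n g b (wt w)) + real (wt w) * H \<le> s" using bound by linarith
    thus ?thesis using t by blast
  qed
  have claim2: "\<exists>s\<in>SG. s \<le> t" if tT: "t \<in> T" for t
  proof -
    obtain i where i: "i \<le> n+1" "a_coef n g b i > 0" "t = - log 2 (a_coef n g b i) + real i * H"
      using tT unfolding T_def by auto
    obtain w where w: "w \<in> vecs (n+1)" "wt w = i" "a_coef n g b i = (walsh (n+1) f w)\<^sup>2"
      using Ain[OF i(1)] by blast
    define as where "as = map (\<lambda>c. if c then astar else replicate n False) w"
    have asL: "as \<in> LS (n+1) n" using w(1) astar(1) by (auto simp: as_def LS_def vecs_def)
    have "walsh N G (concat as) = walsh (n+1) f w * (walsh n g astar) ^ i"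
    proof -
      have m1: "map nz as = w" unfolding as_def by (rule map_nz_star[OF nzstar])
      have p1: "prod_list (map (phi g n) as) = (walsh n g astar) ^ (wt w)"
        unfolding as_def by (rule prod_phi_star[OF nzstar])
      show ?thesis using wG[OF asL] m1 p1 w(2) by simp
    qed
    hence sq: "(walsh N G (concat as))\<^sup>2 = a_coef n g b i * ((walsh n g astar)\<^sup>2) ^ i"
      using w(3) by (simp add: power_mult_distrib power_mult[symmetric] mult.commute)
    have pos1: "a_coef n g b i > 0" by (rule i(2))
    have pos2: "((walsh n g astar)\<^sup>2) ^ i > 0" using astar(2) by simp
    have "log 2 (1 / (walsh N G (concat as))\<^sup>2) = t"
      unfolding sq i(3) astar(3) using pos1 pos2 astar(2)
      by (simp add: log_recip log_mult_pos log_nat_power)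
    moreover have "log 2 (1 / (walsh N G (concat as))\<^sup>2) \<in> SG"
    proof -
      have cv: "concat as \<in> vecs N" using concat_LS[OF asL] NN by simp
      have "(walsh N G (concat as))\<^sup>2 \<noteq> 0" unfolding sq using pos1 pos2 by (metis mult_pos_pos less_irrefl)
      thus ?thesis unfolding SG_def using cv by blast
    qed
    ultimately show ?thesis by force
  qed
  have neT: "T \<noteq> {}" using claim1 Min_in[OF finSG neSG] by blast
  have MinEq: "Min SG = Min T"
  proof (rule order.antisym)
    obtain s where "s \<in> SG" "s \<le> Min T" using claim2 Min_in[OF finT neT] by blast
    thus "Min SG \<le> Min T" using Min_le[OF finSG] by (meson order.trans)
  next
    obtain t where "t \<in> T" "t \<le> Min SG" using claim1 Min_in[OF finSG neSG] by blast
    thus "Min T \<le> Min SG" using Min_le[OF finT] by (meson order.trans)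
  qed
  have meG: "min_entropy N G = Min T"
    using MinEq by (simp add: min_entropy_def SG_def)
  have part1: "min_entropy N G / influence N G = Min T / (I * (I + eps n g b))"
    by (simp add: meG infG)
  have part2: "Min T = (real t + 3) * H"
    if t: "t < n" "odd t = b" "plateaued n g" "resilient n g t" "\<not> resilient n g (t+1)" for t
  proof -
    obtain c where c: "\<And>a. a \<in> vecs n \<Longrightarrow> walsh n g a \<in> {0, c, -c}"
      using t(3) unfolding plateaued_def by blast
    have sqc: "(walsh n g a)\<^sup>2 = c\<^sup>2" if "a \<in> vecs n" "walsh n g a \<noteq> 0" for a
      using c[OF that(1)] that(2) by auto
    have c2: "(walsh n g astar)\<^sup>2 = c\<^sup>2" using sqc astar by simp
    have Hc: "H = - log 2 (c\<^sup>2)" using astar(3) c2 by (simp add: log_recip)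
    have c0: "c\<^sup>2 > 0" using c2 astar(2) by simp
    have c1: "c\<^sup>2 \<le> 1"
    proof -
      have "(walsh n g astar)\<^sup>2 \<le> (\<Sum>a\<in>vecs n. (walsh n g a)\<^sup>2)"
        by (rule member_le_sum) (simp_all add: astar(1))
      thus ?thesis using parseval[of n g] c2 by simp
    qed
    have H0: "H \<ge> 0" unfolding Hc using c0 c1 by simp
    have split: "\<exists>a d. w = a @ [d] \<and> a \<in> vecs n" if wp: "w \<in> vecs (n+1)" for w
    proof -
      have "w \<noteq> []" using wp by (auto simp: vecs_def)
      then obtain a d where "w = a @ [d]" using rev_exhaust by blast
      thus ?thesis using wp by (auto simp: vecs_def)
    qed
    have ge: "i \<ge> t + 2 \<and> a_coef n g b i = c\<^sup>2" if ip: "i \<le> n+1" "a_coef n g b i > 0" for i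
    proof -
      obtain w where w: "w \<in> vecs (n+1)" "wt w = i" "a_coef n g b i = (walsh (n+1) f w)\<^sup>2"
        using Ain[OF ip(1)] by blast
      obtain a d where ad: "w = a @ [d]" "a \<in> vecs n" using split[OF w(1)] by blast
      have Wf: "walsh (n+1) f w \<noteq> 0" using w(3) ip(2) by auto
      hence d: "d = (b \<noteq> odd (wt a))" and Wa: "walsh n g a = walsh (n+1) f w"
        using walsh_gb[OF ad(2), of g b d] ad(1) by (auto simp: f_def split: if_splits)
      have Wa0: "walsh n g a \<noteq> 0" using Wa Wf by simp
      have "wt a \<ge> t + 1"
      proof (rule ccontr)
        assume "\<not> ?thesis"
        hence "walsh n g a = 0" using t(4) ad(2) unfolding resilient_def by auto
        thus False using Wa0 by simp
      qed
      moreover have "wt a = t + 1 \<Longrightarrow> d" using d t(2) by auto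
      ultimately have "i \<ge> t + 2" using w(2) ad(1) by (cases d; cases "wt a = t + 1") (auto simp: wt_append)
      moreover have "a_coef n g b i = c\<^sup>2" using w(3) Wa sqc[OF ad(2) Wa0] by simp
      ultimately show ?thesis by simp
    qed
    have inT: "(real t + 3) * H \<in> T"
    proof -
      obtain a where a: "a \<in> vecs n" "wt a \<le> t + 1" "walsh n g a \<noteq> 0"
        using t(5) unfolding resilient_def by blast
      have wa: "wt a = t + 1"
      proof (rule ccontr)
        assume "wt a \<noteq> t + 1" hence "wt a \<le> t" using a(2) by simp
        hence "walsh n g a = 0" using t(4) a(1) unfolding resilient_def by auto
        thus False using a(3) by simp
      qed
      have d: "True = (b \<noteq> odd (wt a))" using wa t(2) by simp
      have Wf: "walsh (n+1) f (a @ [True]) = walsh n g a"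
        using walsh_gb[OF a(1), of g b True] d by (simp add: f_def)
      have wv: "a @ [True] \<in> vecs (n+1)" using a(1) by (simp add: vecs_def)
      have wwt: "wt (a @ [True]) = t + 2" using wa by (simp add: wt_append)
      have "(walsh n g a)\<^sup>2 \<le> a_coef n g b (t+2)" using Aw[OF wv] Wf wwt by simp
      hence apos: "a_coef n g b (t+2) > 0" using a(3) by (smt (verit) zero_less_power2)
      have tn: "t + 2 \<le> n + 1" using t(1) by simp
      have "a_coef n g b (t+2) = c\<^sup>2" using ge[OF tn apos] by simp
      hence "- log 2 (a_coef n g b (t+2)) + real (t+2) * H = (real t + 3) * H"
        using Hc by (simp add: algebra_simps)
      moreover have "- log 2 (a_coef n g b (t+2)) + real (t+2) * H \<in> T"
        unfolding T_def using tn apos by (intro CollectI exI[of _ "t+2"]) simp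
      ultimately show ?thesis by simp
    qed
    show ?thesis
    proof (rule Min_eqI[OF finT _ inT])
      fix y assume "y \<in> T"
      then obtain i where i: "i \<le> n+1" "a_coef n g b i > 0" "y = - log 2 (a_coef n g b i) + real i * H"
        unfolding T_def by auto
      have gi: "i \<ge> t + 2" "a_coef n g b i = c\<^sup>2" using ge[OF i(1,2)] by auto
      have "y = (real i + 1) * H" using i(3) gi(2) Hc by (simp add: algebra_simps)
      moreover have "real t + 3 \<le> real i + 1" using gi(1) by simp
      ultimately show "(real t + 3) * H \<le> y" using H0 by (simp add: mult_right_mono)
    qed
  qed
  have T_eq: "{- log 2 (a_coef n g b i) + real i * min_entropy n g | i. i \<in> {0..n+1} \<and> a_coef n g b i > 0} = T"
    by (simp add: T_def H_def)
  have P1: "min_entropy (n*(n+1)) G / influence (n*(n+1)) G =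
           Min {- log 2 (a_coef n g b i) + real i * min_entropy n g | i. i \<in> {0..n+1} \<and> a_coef n g b i > 0}
           / (influence n g * (influence n g + eps n g b))"
    using part1 unfolding T_eq N_def I_def .
  have P2: "min_entropy (n*(n+1)) G / influence (n*(n+1)) G =
             min_entropy n g / influence n g * ((real t + 3) / (influence n g + eps n g b))"
    if tt: "t < n \<and> odd t = b \<and> plateaued n g \<and> resilient n g t \<and> \<not> resilient n g (t+1)" for t
  proof -
    have "Min T = (real t + 3) * H" using part2 tt by blast
    hence "min_entropy N G / influence N G = H / I * ((real t + 3) / (I + eps n g b))"
      using part1 by (simp add: times_divide_times_eq mult.commute)
    thus ?thesis unfolding N_def I_def H_def .
  qed
  show ?thesis using P1 P2 by blast
qed


end
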